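(* Let $(\Omega,\Sigma,\mathbb{P})$ be a probability space and let $X_t:\Omega\to[0,\infty)$, $t\in\mathbb{N}$, be random variables such that $A:=\limsup_{t\to\infty}(E[X_t])^{1/t}<1$. For $\varepsilon>0$ let $\tau_\varepsilon:=\inf\{t\in\mathbb{N}: X_t<\varepsilon\}$. Then $$\limsup_{\varepsilon\to0^+}\frac{E[\tau_\varepsilon]}{|\log\varepsilon|}\leq\frac{-1}{\log A}.$$
   Context: Convention: if $E[X_t]=\infty$ then $(E[X_t])^{1/t}:=\infty$; if $A=0$ then $\frac{-1}{\log A}:=0$. $\log$ is the natural logarithm. *)

theory Defs
  imports "HOL-Probability.Probability"
begin

definition root_moment :: "nat \<Rightarrow> ennreal \<Rightarrow> ereal" where
  "root_moment t e = (if e = \<infinity> then \<infinity> else ereal (root t (enn2real e)))"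

definition hitting_time :: "(nat \<Rightarrow> 'a \<Rightarrow> real) \<Rightarrow> real \<Rightarrow> 'a \<Rightarrow> ennreal" where
  "hitting_time X \<epsilon> \<omega> =
     (if \<exists>t\<ge>1. X t \<omega> < \<epsilon> then of_nat (LEAST t. t \<ge> 1 \<and> X t \<omega> < \<epsilon>) else \<infinity>)"

end

theory Submission imports Defs begin

lemma hit_le:
  "hitting_time X \<epsilon> \<omega> \<le> 1 + (\<Sum>t. if \<epsilon> \<le> X (Suc t) \<omega> then 1 else (0::ennreal))"
proof (cases "\<exists>t\<ge>1. X t \<omega> < \<epsilon>")
  case True
  define n where "n = (LEAST t. t \<ge> 1 \<and> X t \<omega> < \<epsilon>)"
  have ex: "\<exists>t. t \<ge> 1 \<and> X t \<omega> < \<epsilon>" using True by auto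
  have n1: "n \<ge> 1" using LeastI_ex[OF ex] n_def by auto
  have small: "\<epsilon> \<le> X (Suc t) \<omega>" if "t < n - 1" for t
  proof -
    have "Suc t < n" using that by arith
    hence "\<not> (Suc t \<ge> 1 \<and> X (Suc t) \<omega> < \<epsilon>)" unfolding n_def by (rule not_less_Least)
    thus ?thesis by simp
  qed
  have "(of_nat (n-1)::ennreal) = (\<Sum>t<n-1. (if \<epsilon> \<le> X (Suc t) \<omega> then 1 else (0::ennreal)))"
    using small by simp
  also have "\<dots> \<le> (\<Sum>t. if \<epsilon> \<le> X (Suc t) \<omega> then 1 else (0::ennreal))"
    by (rule sum_le_suminf) auto
  finally have "1 + of_nat (n-1) \<le> 1 + (\<Sum>t. if \<epsilon> \<le> X (Suc t) \<omega> then 1 else (0::ennreal))"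
    by (rule add_left_mono)
  moreover have "hitting_time X \<epsilon> \<omega> = 1 + of_nat (n-1)"
  proof -
    have "(of_nat (1 + (n-1))::ennreal) = 1 + of_nat (n-1)" by simp
    moreover have "1 + (n-1) = n" using n1 by simp
    ultimately show ?thesis
      using True unfolding hitting_time_def n_def[symmetric] by simp
  qed
  ultimately show ?thesis by simp
next
  case False
  hence "(\<lambda>t. if \<epsilon> \<le> X (Suc t) \<omega> then 1 else (0::ennreal)) = (\<lambda>t. ennreal 1)"
    by (auto simp: fun_eq_iff not_less)
  moreover have "(\<Sum>t. ennreal 1) = \<top>"
    by (rule summable_iff_suminf_neq_top) (auto simp: summable_const_iff)
  ultimately show ?thesis by simp
qed

lemma int_le:
  fixes M :: "'a measure" and X :: "nat \<Rightarrow> 'a \<Rightarrow> real"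
  assumes "prob_space M" and meas: "\<And>t. X t \<in> borel_measurable M"
  shows "(\<integral>\<^sup>+ \<omega>. hitting_time X \<epsilon> \<omega> \<partial>M)
     \<le> 1 + (\<Sum>t. emeasure M {x\<in>space M. \<epsilon> \<le> X (Suc t) x})"
proof -
  interpret prob_space M by fact
  have sets: "\<And>t. {x\<in>space M. \<epsilon> \<le> X (Suc t) x} \<in> sets M"
    using meas by measurable
  have "(\<integral>\<^sup>+ \<omega>. hitting_time X \<epsilon> \<omega> \<partial>M)
     \<le> (\<integral>\<^sup>+ \<omega>. 1 + (\<Sum>t. indicator {x\<in>space M. \<epsilon> \<le> X (Suc t) x} \<omega>) \<partial>M)"
  proof (rule nn_integral_mono)
    fix \<omega> assume "\<omega> \<in> space M"
    hence "(\<lambda>t. if \<epsilon> \<le> X (Suc t) \<omega> then 1 else (0::ennreal))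
       = (\<lambda>t. indicator {x\<in>space M. \<epsilon> \<le> X (Suc t) x} \<omega>)"
      by (auto simp: fun_eq_iff indicator_def)
    thus "hitting_time X \<epsilon> \<omega> \<le> 1 + (\<Sum>t. indicator {x\<in>space M. \<epsilon> \<le> X (Suc t) x} \<omega>)"
      using hit_le[of X \<epsilon> \<omega>] by simp
  qed
  also have "\<dots> = (\<integral>\<^sup>+ \<omega>. 1 \<partial>M) + (\<integral>\<^sup>+ \<omega>. (\<Sum>t. indicator {x\<in>space M. \<epsilon> \<le> X (Suc t) x} \<omega>) \<partial>M)"
    by (rule nn_integral_add) (use sets in auto)
  also have "\<dots> = 1 + (\<Sum>t. emeasure M {x\<in>space M. \<epsilon> \<le> X (Suc t) x})"
    using sets by (simp add: nn_integral_suminf emeasure_space_1)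
  finally show ?thesis .
qed

lemma markov:
  fixes M :: "'a measure" and X :: "'a \<Rightarrow> real"
  assumes meas: "X \<in> borel_measurable M" and "0 \<le> \<epsilon>"
  shows "ennreal \<epsilon> * emeasure M {x\<in>space M. \<epsilon> \<le> X x} \<le> (\<integral>\<^sup>+ \<omega>. ennreal (X \<omega>) \<partial>M)"
proof -
  have sets: "{x\<in>space M. \<epsilon> \<le> X x} \<in> sets M"
    using meas by measurable
  have "ennreal \<epsilon> * emeasure M {x\<in>space M. \<epsilon> \<le> X x}
     = (\<integral>\<^sup>+ \<omega>. ennreal \<epsilon> * indicator {x\<in>space M. \<epsilon> \<le> X x} \<omega> \<partial>M)"
    using nn_integral_cmult_indicator[OF sets, of "ennreal \<epsilon>"] by simp
  also have "\<dots> \<le> (\<integral>\<^sup>+ \<omega>. ennreal (X \<omega>) \<partial>M)"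
    by (rule nn_integral_mono) (auto simp: indicator_def intro: ennreal_leI)
  finally show ?thesis .
qed

lemma core:
  fixes M :: "'a measure" and X :: "nat \<Rightarrow> 'a \<Rightarrow> real" and a :: real
  assumes "prob_space M" and meas: "\<And>t. X t \<in> borel_measurable M"
    and a: "0 < a" "a < 1"
    and T: "\<And>t. t \<ge> T \<Longrightarrow> (\<integral>\<^sup>+ \<omega>. ennreal (X t \<omega>) \<partial>M) \<le> ennreal (a ^ t)"
    and eps: "0 < \<epsilon>" "\<epsilon> < 1"
  shows "(\<integral>\<^sup>+ \<omega>. hitting_time X \<epsilon> \<omega> \<partial>M)
     \<le> ennreal (2 + real T + 1 / (1 - a) + ln \<epsilon> / ln a)"
proof -
  interpret prob_space M by fact
  define N where "N = nat \<lceil>ln \<epsilon> / ln a\<rceil>"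
  define K where "K = T + N"
  define c where "c = (\<lambda>t. if t < K then 1 else a ^ (t - K))"
  have lna: "ln a < 0" using a by simp
  have lne: "ln \<epsilon> < 0" using eps by simp
  have q: "0 \<le> ln \<epsilon> / ln a" using lna lne by (simp add: divide_nonpos_neg)
  have Nle: "real N \<le> ln \<epsilon> / ln a + 1" unfolding N_def using q by linarith
  have Nge: "ln \<epsilon> / ln a \<le> real N" unfolding N_def by linarith
  have aN: "a ^ N \<le> \<epsilon>"
  proof -
    have "real N * ln a \<le> ln \<epsilon>" using Nge lna by (simp add: divide_le_eq mult.commute)
    hence "exp (real N * ln a) \<le> exp (ln \<epsilon>)" by simp
    thus ?thesis using a eps by (simp add: exp_of_nat_mult[symmetric] exp_ln ln_realpow[symmetric])
  qed
  have bnd: "emeasure M {x\<in>space M. \<epsilon> \<le> X (Suc t) x} \<le> ennreal (c t)" for t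
  proof (cases "t < K")
    case True
    thus ?thesis by (simp add: c_def emeasure_le_1)
  next
    case False
    hence tK: "K \<le> t" by simp
    have "ennreal \<epsilon> * emeasure M {x\<in>space M. \<epsilon> \<le> X (Suc t) x} \<le> ennreal (a ^ Suc t)"
      using markov[OF meas[of "Suc t"], of \<epsilon>] T[of "Suc t"] tK eps unfolding K_def by force
    hence "\<epsilon> * prob {x\<in>space M. \<epsilon> \<le> X (Suc t) x} \<le> a ^ Suc t"
      using eps a by (simp add: emeasure_eq_measure ennreal_mult''[symmetric] ennreal_le_iff)
    also have "a ^ Suc t \<le> a ^ t" using a by (simp add: power_decreasing)
    also have "a ^ t = a ^ (t - K) * a ^ T * a ^ N"
      using tK unfolding K_def by (simp add: power_add[symmetric])
    also have "\<dots> \<le> a ^ (t - K) * 1 * \<epsilon>"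
      using a aN by (intro mult_mono) (auto simp: power_le_one)
    finally have "prob {x\<in>space M. \<epsilon> \<le> X (Suc t) x} \<le> a ^ (t - K)"
      using eps by (simp add: mult.commute)
    thus ?thesis using False by (simp add: c_def emeasure_eq_measure ennreal_leI)
  qed
  have shift: "(\<lambda>n. c (n + K)) = (\<lambda>n. a ^ n)" by (simp add: c_def fun_eq_iff)
  have sc: "summable c"
    using summable_iff_shift[of c K] shift summable_geometric[of a] a by simp
  have sumc: "suminf c = 1 / (1 - a) + real K"
    using suminf_split_initial_segment[OF sc, of K] shift suminf_geometric[of a] a
    by (simp add: c_def)
  have "(\<integral>\<^sup>+ \<omega>. hitting_time X \<epsilon> \<omega> \<partial>M)
     \<le> 1 + (\<Sum>t. emeasure M {x\<in>space M. \<epsilon> \<le> X (Suc t) x})"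
    by (rule int_le) (use assms in auto)
  also have "\<dots> \<le> 1 + (\<Sum>t. ennreal (c t))"
    by (intro add_left_mono suminf_le bnd) auto
  also have "(\<Sum>t. ennreal (c t)) = ennreal (suminf c)"
    by (rule suminf_ennreal2) (use sc a in \<open>auto simp: c_def\<close>)
  also have "1 + ennreal (suminf c) = ennreal (1 + suminf c)"
    using sc a by (subst ennreal_plus) (auto simp: sumc)
  also have "\<dots> \<le> ennreal (2 + real T + 1 / (1 - a) + ln \<epsilon> / ln a)"
    using Nle by (intro ennreal_leI) (simp add: sumc K_def)
  finally show ?thesis .
qed

lemma lim_aux:
  fixes B a :: real
  shows "((\<lambda>\<epsilon>. ereal (B / (- ln \<epsilon>) - 1 / ln a)) \<longlongrightarrow> ereal (- 1 / ln a)) (at_right 0)"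
proof -
  have "filterlim (\<lambda>\<epsilon>::real. - ln \<epsilon>) at_top (at_right 0)"
    by (rule filterlim_compose[OF filterlim_uminus_at_top_at_bot ln_at_0])
  hence "((\<lambda>\<epsilon>::real. B / (- ln \<epsilon>)) \<longlongrightarrow> 0) (at_right 0)"
    by (intro tendsto_divide_0[OF tendsto_const] filterlim_at_top_imp_at_infinity)
  hence "((\<lambda>\<epsilon>::real. B / (- ln \<epsilon>) - 1 / ln a) \<longlongrightarrow> 0 - 1 / ln a) (at_right 0)"
    by (intro tendsto_diff tendsto_const)
  thus ?thesis by (intro tendsto_ereal) simp
qed

theorem theorem2:
  fixes M :: "'a measure" and X :: "nat \<Rightarrow> 'a \<Rightarrow> real" and A :: ereal
  assumes "prob_space M"
    and "\<And>t. X t \<in> borel_measurable M"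
    and "\<And>t \<omega>. \<omega> \<in> space M \<Longrightarrow> X t \<omega> \<ge> 0"
    and A_def: "A = limsup (\<lambda>t. root_moment t (\<integral>\<^sup>+ \<omega>. ennreal (X t \<omega>) \<partial>M))"
    and "A < 1"
  shows "Limsup (at_right (0::real))
           (\<lambda>\<epsilon>. enn2ereal (\<integral>\<^sup>+ \<omega>. hitting_time X \<epsilon> \<omega> \<partial>M) / ereal \<bar>ln \<epsilon>\<bar>)
         \<le> (if A = 0 then 0 else ereal (-1 / ln (real_of_ereal A)))"
proof -
  define E where "E = (\<lambda>t. \<integral>\<^sup>+ \<omega>. ennreal (X t \<omega>) \<partial>M)"
  define L where "L = Limsup (at_right (0::real))
           (\<lambda>\<epsilon>. enn2ereal (\<integral>\<^sup>+ \<omega>. hitting_time X \<epsilon> \<omega> \<partial>M) / ereal \<bar>ln \<epsilon>\<bar>)"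
  have A0: "0 \<le> A"
    unfolding A_def
  proof (rule le_Limsup)
    show "sequentially \<noteq> bot" by simp
    show "\<forall>\<^sub>F t in sequentially. 0 \<le> root_moment t (\<integral>\<^sup>+ \<omega>. ennreal (X t \<omega>) \<partial>M)"
      by (auto simp: root_moment_def intro!: always_eventually real_root_ge_zero)
  qed
  have key: "L \<le> ereal (- 1 / ln a)" if Aa: "A < ereal a" and a1: "a < 1" for a
  proof -
    have "0 < ereal a" using A0 Aa by (rule le_less_trans)
    hence a0: "0 < a" by simp
    have "\<forall>\<^sub>F t in sequentially. root_moment t (E t) < ereal a"
      using Aa unfolding A_def E_def by (rule Limsup_lessD)
    then obtain T0 where T0: "\<And>t. t \<ge> T0 \<Longrightarrow> root_moment t (E t) < ereal a"
      by (auto simp: eventually_sequentially)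
    define T where "T = max 1 T0"
    have TE: "E t \<le> ennreal (a ^ t)" if "t \<ge> T" for t
    proof -
      have r: "root_moment t (E t) < ereal a" using T0 that T_def by auto
      hence fin: "E t \<noteq> \<infinity>" by (auto simp: root_moment_def)
      hence "root t (enn2real (E t)) < a" using r by (simp add: root_moment_def)
      moreover have t1: "0 < t" using that T_def by auto
      ultimately have "root t (enn2real (E t)) ^ t < a ^ t"
        by (intro power_strict_mono) auto
      hence "enn2real (E t) < a ^ t" using t1 by (simp add: real_root_pow_pos2)
      hence "ennreal (enn2real (E t)) \<le> ennreal (a ^ t)" by (intro ennreal_leI) simp
      thus ?thesis using fin by (simp add: less_top)
    qed
    define B where "B = 2 + real T + 1 / (1 - a)"
    have ev: "\<forall>\<^sub>F \<epsilon> in at_right (0::real).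
       enn2ereal (\<integral>\<^sup>+ \<omega>. hitting_time X \<epsilon> \<omega> \<partial>M) / ereal \<bar>ln \<epsilon>\<bar>
       \<le> ereal (B / (- ln \<epsilon>) - 1 / ln a)"
      unfolding eventually_at_right_field
    proof (intro exI[of _ 1] conjI allI impI)
      fix \<epsilon> :: real assume e: "0 < \<epsilon>" "\<epsilon> < 1"
      have lna: "ln a < 0" using a0 a1 by simp
      have lne: "ln \<epsilon> < 0" using e by simp
      define V where "V = 2 + real T + 1 / (1 - a) + ln \<epsilon> / ln a"
      have V0: "0 \<le> V" unfolding V_def using lna lne a1
        by (simp add: divide_nonpos_neg add_nonneg_nonneg)
      have "(\<integral>\<^sup>+ \<omega>. hitting_time X \<epsilon> \<omega> \<partial>M) \<le> ennreal V"
        unfolding V_def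
        by (rule core[where T=T, OF assms(1) assms(2) a0 a1 _ e]) (use TE in \<open>simp add: E_def\<close>)
      hence "enn2ereal (\<integral>\<^sup>+ \<omega>. hitting_time X \<epsilon> \<omega> \<partial>M) \<le> ereal V"
        using V0 by (simp add: less_eq_ennreal.rep_eq enn2ereal_ennreal)
      hence "enn2ereal (\<integral>\<^sup>+ \<omega>. hitting_time X \<epsilon> \<omega> \<partial>M) / ereal \<bar>ln \<epsilon>\<bar>
          \<le> ereal V / ereal \<bar>ln \<epsilon>\<bar>"
        using lne by (intro ereal_divide_right_mono) auto
      also have "ereal V / ereal \<bar>ln \<epsilon>\<bar> = ereal (V / (- ln \<epsilon>))"
        using lne by (simp add: ereal_divide)
      also have "V / (- ln \<epsilon>) = B / (- ln \<epsilon>) - 1 / ln a"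
        unfolding V_def B_def using lne lna by (simp add: field_simps)
      finally show "enn2ereal (\<integral>\<^sup>+ \<omega>. hitting_time X \<epsilon> \<omega> \<partial>M) / ereal \<bar>ln \<epsilon>\<bar>
       \<le> ereal (B / (- ln \<epsilon>) - 1 / ln a)" .
    qed simp
    have "L \<le> Limsup (at_right (0::real)) (\<lambda>\<epsilon>. ereal (B / (- ln \<epsilon>) - 1 / ln a))"
      unfolding L_def by (rule Limsup_mono[OF ev])
    also have "\<dots> = ereal (- 1 / ln a)"
      by (rule lim_imp_Limsup[OF _ lim_aux]) simp
    finally show ?thesis .
  qed
  show ?thesis
    unfolding L_def[symmetric]
  proof (rule dense_ge)
    fix y :: ereal
    assume y: "(if A = 0 then 0 else ereal (-1 / ln (real_of_ereal A))) < y"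
    show "L \<le> y"
    proof (cases y)
      case PInf thus ?thesis by simp
    next
      case MInf thus ?thesis using y by simp
    next
      case (real r)
      have r0: "0 < r"
      proof (cases "A = 0")
        case True thus ?thesis using y real by simp
      next
        case False
        then obtain q where q: "A = ereal q" "0 < q" "q < 1"
          using A0 \<open>A < 1\<close> by (cases A) auto
        hence "ln q < 0" by simp
        hence h: "0 < - (1 / ln q)" by simp
        have "- (1 / ln q) < r" using y real q False by simp
        thus ?thesis using h by linarith
      qed
      define a where "a = exp (- 1 / r)"
      have a1: "a < 1" unfolding a_def using r0 by simp
      have lnaa: "ln a = - 1 / r" unfolding a_def by simp
      have "A < ereal a"
      proof (cases "A = 0")
        case True thus ?thesis unfolding a_def by simp
      next
        case False
        then obtain q where q: "A = ereal q" "0 < q" "q < 1"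
          using A0 \<open>A < 1\<close> by (cases A) auto
        hence lq: "ln q < 0" by simp
        have "- (1 / ln q) < r" using y real q False by simp
        hence "r * ln q < (- (1 / ln q)) * ln q" using lq by (rule mult_strict_right_mono_neg)
        hence "-1 > r * ln q" using lq by simp
        hence "ln q < -1 / r" using r0 by (simp add: field_simps)
        hence "exp (ln q) < a" unfolding a_def by simp
        thus ?thesis using q by simp
      qed
      hence "L \<le> ereal (- 1 / ln a)" using key a1 by blast
      thus ?thesis using real lnaa r0 by simp
    qed
  qed
qed

end
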